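(* Let $R$ be a ring with unity and involution $*$, and let $a,b,c\in R$. The following statements are equivalent. (1) $a$ is left dual $(b,c)$-core invertible. (2) $a$ is left $(b,c)$-invertible and $b$ is $\{1,4\}$-invertible. (3) $a$ is left $(b,c)$-invertible and $ab$ is $\{1,4\}$-invertible. (4) $a$ is left $(b,c)$-invertible and $cab$ is $\{1,4\}$-invertible. In this case, for any left $(b,c)$-inverse $a_l^{(b,c)}$ of $a$ and any $\{1,4\}$-inverses $b^{(1,4)}$, $(ab)^{(1,4)}$, $(cab)^{(1,4)}$ of $b$, $ab$, $cab$ respectively, each of the elements $b^{(1,4)}a_l^{(b,c)}$, $(ab)^{(1,4)}a\,a_l^{(b,c)}$ and $(cab)^{(1,4)}c$ is a left dual $(b,c)$-core inverse of $a$.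
   Context: An element $a\in R$ is called left dual $(b,c)$-core invertible if there exists $x\in Rc$ such that $bxab=b$ and $(xab)^*=xab$; such an $x$ is called a left dual $(b,c)$-core inverse of $a$. The element $a$ is left $(b,c)$-invertible if $b\in Rcab$, equivalently there exists $x\in Rc$ with $xab=b$; any such $x$ is a left $(b,c)$-inverse of $a$, denoted $a_l^{(b,c)}$. An element $y$ is $\{1,4\}$-invertible if there exists $z$ with $yzy=y$ and $(zy)^*=zy$; such $z$ is a $\{1,4\}$-inverse of $y$. *)

theory Defs
  imports Main
begin

definition involution :: "('a::ring_1 \<Rightarrow> 'a) \<Rightarrow> bool" where
  "involution st \<longleftrightarrow>
     (\<forall>x y. st (x + y) = st x + st y) \<and>
     (\<forall>x y. st (x * y) = st y * st x) \<and>
     (\<forall>x. st (st x) = x)"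

definition left_dual_bc_core_inverse ::
  "('a::ring_1 \<Rightarrow> 'a) \<Rightarrow> 'a \<Rightarrow> 'a \<Rightarrow> 'a \<Rightarrow> 'a \<Rightarrow> bool" where
  "left_dual_bc_core_inverse st a b c x \<longleftrightarrow>
     (\<exists>r. x = r * c) \<and> b * x * a * b = b \<and> st (x * a * b) = x * a * b"

definition left_dual_bc_core_invertible ::
  "('a::ring_1 \<Rightarrow> 'a) \<Rightarrow> 'a \<Rightarrow> 'a \<Rightarrow> 'a \<Rightarrow> bool" where
  "left_dual_bc_core_invertible st a b c \<longleftrightarrow> (\<exists>x. left_dual_bc_core_inverse st a b c x)"

definition left_bc_inverse :: "'a::ring_1 \<Rightarrow> 'a \<Rightarrow> 'a \<Rightarrow> 'a \<Rightarrow> bool" where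
  "left_bc_inverse a b c x \<longleftrightarrow> (\<exists>r. x = r * c) \<and> x * a * b = b"

definition left_bc_invertible :: "'a::ring_1 \<Rightarrow> 'a \<Rightarrow> 'a \<Rightarrow> bool" where
  "left_bc_invertible a b c \<longleftrightarrow> (\<exists>r. b = r * c * a * b)"

definition inverse_14 :: "('a::ring_1 \<Rightarrow> 'a) \<Rightarrow> 'a \<Rightarrow> 'a \<Rightarrow> bool" where
  "inverse_14 st y z \<longleftrightarrow> y * z * y = y \<and> st (z * y) = z * y"

definition invertible_14 :: "('a::ring_1 \<Rightarrow> 'a) \<Rightarrow> 'a \<Rightarrow> bool" where
  "invertible_14 st y \<longleftrightarrow> (\<exists>z. inverse_14 st y z)"

end

theory Submission
  imports Defs
begin

lemma P1:
  fixes st :: "'a::ring_1 \<Rightarrow> 'a"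
  assumes "left_bc_inverse a b c x" "inverse_14 st b u"
  shows "left_dual_bc_core_inverse st a b c (u * x)"
proof -
  from assms obtain r where r: "x = r * c" and xb: "x * a * b = b"
    unfolding left_bc_inverse_def by blast
  have e: "u * x * a * b = u * b" using xb by (simp add: mult.assoc)
  have "b * (u * x) * a * b = b" using assms(2) e unfolding inverse_14_def
    by (metis mult.assoc)
  moreover have "u * x = (u * r) * c" using r by (simp add: mult.assoc)
  ultimately show ?thesis using assms(2) e
    unfolding left_dual_bc_core_inverse_def inverse_14_def by metis
qed

lemma P2:
  fixes st :: "'a::ring_1 \<Rightarrow> 'a"
  assumes "left_bc_inverse a b c x" "inverse_14 st (a * b) v"
  shows "left_dual_bc_core_inverse st a b c (v * a * x)"
proof -
  from assms obtain r where r: "x = r * c" and xb: "x * a * b = b"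
    unfolding left_bc_inverse_def by blast
  have e: "v * a * x * a * b = v * a * b" using xb by (simp add: mult.assoc)
  have abv: "a * b * v * (a * b) = a * b" using assms(2) unfolding inverse_14_def by simp
  have "b * (v * a * x) * a * b = x * (a * b * v * (a * b))"
    using e xb by (metis mult.assoc)
  also have "\<dots> = b" using abv xb by (simp add: mult.assoc)
  finally have "b * (v * a * x) * a * b = b" .
  moreover have "v * a * x = (v * a * r) * c" using r by (simp add: mult.assoc)
  moreover have "st (v * a * b) = v * a * b"
    using assms(2) unfolding inverse_14_def by (simp add: mult.assoc)
  ultimately show ?thesis using e
    unfolding left_dual_bc_core_inverse_def by metis
qed

lemma P3:
  fixes st :: "'a::ring_1 \<Rightarrow> 'a"
  assumes "left_bc_invertible a b c" "inverse_14 st (c * a * b) w"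
  shows "left_dual_bc_core_inverse st a b c (w * c)"
proof -
  from assms obtain r where r: "b = r * c * a * b"
    unfolding left_bc_invertible_def by blast
  have h: "c * a * b * w * (c * a * b) = c * a * b" "st (w * (c * a * b)) = w * (c * a * b)"
    using assms(2) unfolding inverse_14_def by auto
  have "b * (w * c) * a * b = r * (c * a * b * w * (c * a * b))"
    using r by (metis mult.assoc)
  also have "\<dots> = b" using h r by (simp add: mult.assoc)
  finally show ?thesis using h unfolding left_dual_bc_core_inverse_def
    by (metis mult.assoc)
qed

lemma D:
  fixes st :: "'a::ring_1 \<Rightarrow> 'a"
  assumes "left_dual_bc_core_inverse st a b c x"
  shows "left_bc_invertible a b c" "inverse_14 st b (x * a)"
    "inverse_14 st (a * b) x" "\<exists>r. x = r * c \<and> inverse_14 st (c * a * b) r"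
proof -
  from assms obtain r where r: "x = r * c" and h: "b * x * a * b = b" "st (x * a * b) = x * a * b"
    unfolding left_dual_bc_core_inverse_def by blast
  show "left_bc_invertible a b c" unfolding left_bc_invertible_def
    using h r by (metis mult.assoc)
  show "inverse_14 st b (x * a)" unfolding inverse_14_def using h by (simp add: mult.assoc)
  show "inverse_14 st (a * b) x" unfolding inverse_14_def using h by (metis mult.assoc)
  show "\<exists>r. x = r * c \<and> inverse_14 st (c * a * b) r" unfolding inverse_14_def
    using h r by (metis mult.assoc)
qed

lemma LI:
  assumes "left_bc_invertible a b c"
  shows "\<exists>x. left_bc_inverse a b c x"
  using assms unfolding left_bc_invertible_def left_bc_inverse_def by metis

theorem theorem2p6:
  fixes st :: "'a::ring_1 \<Rightarrow> 'a" and a b c :: 'a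
  assumes "involution st"
  shows "(left_dual_bc_core_invertible st a b c \<longleftrightarrow>
            left_bc_invertible a b c \<and> invertible_14 st b)
       \<and> (left_dual_bc_core_invertible st a b c \<longleftrightarrow>
            left_bc_invertible a b c \<and> invertible_14 st (a * b))
       \<and> (left_dual_bc_core_invertible st a b c \<longleftrightarrow>
            left_bc_invertible a b c \<and> invertible_14 st (c * a * b))
       \<and> (left_dual_bc_core_invertible st a b c \<longrightarrow>
            ((\<forall>x u. left_bc_inverse a b c x \<and> inverse_14 st b u \<longrightarrow>
                left_dual_bc_core_inverse st a b c (u * x))
          \<and> (\<forall>x v. left_bc_inverse a b c x \<and> inverse_14 st (a * b) v \<longrightarrow>
                left_dual_bc_core_inverse st a b c (v * a * x))
          \<and> (\<forall>w. inverse_14 st (c * a * b) w \<longrightarrow>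
                left_dual_bc_core_inverse st a b c (w * c))))"
  unfolding left_dual_bc_core_invertible_def invertible_14_def
  using P1 P2 P3 D LI by metis

end
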